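(* Let $\sigma>n$. There is a constant $C$ such that for all $y\in\mathbb{R}^n$, $$\mathcal{A}_y:=\sup_{w\in\mathbb{R}^n}\int_{|x|>2|w|}\sup_{j\in\mathbb{Z}}\big|\Lambda^y_{j,\sigma}(x-w)-\Lambda^y_{j,\sigma}(x)\big|\,dx\le C\ln(e+|y|).$$
   Context: For $j\in\mathbb{Z}$, $y\in\mathbb{R}^n$, $\sigma>n$, $\Lambda^y_{j,\sigma}(x):=\frac{2^{jn}}{(1+|2^jx-y|)^{\sigma}}$. $C$ depends only on $n$ and $\sigma$. *)

theory Defs
  imports "HOL-Analysis.Analysis"
begin

definition Lambda :: "int \<Rightarrow> real \<Rightarrow> 'a::euclidean_space \<Rightarrow> 'a \<Rightarrow> real" where
  "Lambda j \<sigma> y x = (2 powr (real_of_int j * real DIM('a))) /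
      (1 + norm ((2 powr real_of_int j) *\<^sub>R x - y)) powr \<sigma>"

end

theory Submission
  imports Defs
begin




lemma nn_integral_affine_euclidean:
  fixes f :: "'a::euclidean_space \<Rightarrow> ennreal"
  assumes [measurable]: "f \<in> borel_measurable borel" and c: "c \<noteq> 0"
  shows "(\<integral>\<^sup>+x. f x \<partial>lborel) = ennreal (\<bar>c\<bar>^DIM('a)) * (\<integral>\<^sup>+x. f (t + c *\<^sub>R x) \<partial>lborel)"
  by (subst lborel_affine[OF c, of t])
     (simp add: nn_integral_density nn_integral_distr nn_integral_cmult)

lemma nn_integral_translate:
  fixes f :: "'a::euclidean_space \<Rightarrow> ennreal"
  assumes [measurable]: "f \<in> borel_measurable borel"
  shows "(\<integral>\<^sup>+x. f (x + c) \<partial>lborel) = (\<integral>\<^sup>+x. f x \<partial>lborel)"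
  using nn_integral_affine_euclidean[OF assms, of 1 c] by (simp add: add.commute)


lemma ennreal_le_suminf: "(f::nat \<Rightarrow> ennreal) k \<le> suminf f"
  using sum_le_suminf[of f "{k}"] by simp

lemma One_inner_Basis: "b \<in> Basis \<Longrightarrow> (One::'a::euclidean_space) \<bullet> b = 1"
  by (simp add: inner_sum_left inner_Basis if_distrib cong: if_cong)

lemma tail_bound:
  fixes R s :: real
  assumes R: "R > 0" and s: "s > real DIM('a::euclidean_space)"
  shows "(\<integral>\<^sup>+u. indicator {u::'a. R < norm u} u * ennreal (norm u powr (-s)) \<partial>lborel)
     \<le> ennreal (4^DIM('a) / (1 - 2 powr (real DIM('a) - s)) * R powr (real DIM('a) - s))"
proof -
  define n where "n = real DIM('a)"
  define q where "q = 2 powr (n - s)"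
  have q0: "0 < q" and q1: "q < 1" using s powr_less_mono[of "real DIM('a) - s" 0 2] by (auto simp: q_def n_def)
  define B where "B k = cbox (- ((2 powr (real k + 1) * R) *\<^sub>R One)) ((2 powr (real k + 1) * R) *\<^sub>R (One::'a))" for k :: nat
  have pw: "indicator {u::'a. R < norm u} u * ennreal (norm u powr (-s))
      \<le> (\<Sum>k. ennreal ((2 powr real k * R) powr (-s)) * indicator (B k) u)" for u
  proof (cases "R < norm u")
    case False then show ?thesis by simp
  next
    case True
    define k where "k = nat \<lfloor>log 2 (norm u / R)\<rfloor>"
    have nu: "0 < norm u / R" using True R by (intro divide_pos_pos) linarith+
    have lg: "0 < log 2 (norm u / R)" using True R by (subst zero_less_log_cancel_iff) (auto simp: field_simps)
    have k1: "2 powr real k \<le> norm u / R"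
    proof -
      have "2 powr real k = 2 powr (real_of_int \<lfloor>log 2 (norm u / R)\<rfloor>)"
        using lg by (simp add: k_def)
      also have "\<dots> \<le> 2 powr (log 2 (norm u / R))" by (intro powr_mono) auto
      also have "\<dots> = norm u / R" using True R by (intro powr_log_cancel) (use nu in auto)
      finally show ?thesis .
    qed
    have k2: "norm u / R < 2 powr (real k + 1)"
    proof -
      have "norm u / R = 2 powr (log 2 (norm u / R))" using True R by (intro powr_log_cancel[symmetric]) (use nu in auto)
      also have "\<dots> < 2 powr (real k + 1)"
        using lg by (intro powr_less_mono) (auto simp: k_def)
      finally show ?thesis .
    qed
    have inB: "u \<in> B k"
    proof -
      have "norm u < 2 powr (real k + 1) * R" using k2 R by (simp add: field_simps)
      then show ?thesis unfolding B_def mem_box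
        by (auto simp: One_inner_Basis abs_le_iff dest!: Basis_le_norm[of _ u] intro: order_trans[OF abs_ge_self] )
    qed
    have "norm u powr (-s) \<le> (2 powr real k * R) powr (-s)"
      using k1 R s True by (intro powr_mono2') (auto simp: field_simps n_def intro: order.strict_trans1[OF _ of_nat_0_less_iff[THEN iffD2]])
    then have "indicator {u::'a. R < norm u} u * ennreal (norm u powr (-s))
       \<le> ennreal ((2 powr real k * R) powr (-s)) * indicator (B k) u"
      using True inB by simp
    also have "\<dots> \<le> (\<Sum>k. ennreal ((2 powr real k * R) powr (-s)) * indicator (B k) u)"
      by (rule ennreal_le_suminf)
    finally show ?thesis .
  qed
  have mB: "emeasure lborel (B k) = ennreal ((2 * (2 powr (real k + 1) * R)) ^ DIM('a))" for k
  proof -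
    have "emeasure lborel (B k) = (\<Prod>b\<in>(Basis::'a set). 2 * (2 powr (real k + 1) * R))"
      unfolding B_def emeasure_lborel_cbox_eq using R
      by (auto simp: One_inner_Basis algebra_simps intro!: prod.cong)
    then show ?thesis by (simp add: prod_constant)
  qed
  have trm: "ennreal ((2 powr real k * R) powr (-s)) * emeasure lborel (B k)
     = ennreal (4^DIM('a) * R powr (n - s) * q ^ k)" for k
  proof -
    have "(2 powr real k * R) powr (-s) * (2 * (2 powr (real k + 1) * R)) ^ DIM('a)
       = 4^DIM('a) * R powr (n - s) * q ^ k"
    proof -
      have e1: "(2 * (2 powr (real k + 1) * R)) ^ DIM('a) = (4 * 2 powr real k * R) powr n"
        using R by (simp add: n_def powr_realpow powr_add power_mult_distrib mult.assoc)
      have "(2 powr real k * R) powr (-s) * (4 * 2 powr real k * R) powr n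
          = 4 powr n * (2 powr real k * R) powr (n - s)"
        using R by (simp add: powr_mult powr_diff powr_minus field_simps)
      also have "\<dots> = 4^DIM('a) * R powr (n - s) * q ^ k"
        using R by (simp add: n_def q_def powr_mult powr_realpow[symmetric] powr_powr mult.commute)
      finally show ?thesis using e1 by simp
    qed
    then show ?thesis using R by (simp add: mB ennreal_mult'[symmetric])
  qed
  have "(\<integral>\<^sup>+u. indicator {u::'a. R < norm u} u * ennreal (norm u powr (-s)) \<partial>lborel)
     \<le> (\<integral>\<^sup>+u. (\<Sum>k. ennreal ((2 powr real k * R) powr (-s)) * indicator (B k) u) \<partial>lborel)"
    by (intro nn_integral_mono pw)
  also have "\<dots> = (\<Sum>k. \<integral>\<^sup>+u. ennreal ((2 powr real k * R) powr (-s)) * indicator (B k) u \<partial>lborel)"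
    by (intro nn_integral_suminf) (auto simp: B_def)
  also have "\<dots> = (\<Sum>k. ennreal (4^DIM('a) * R powr (n - s) * q ^ k))"
    by (simp add: nn_integral_cmult_indicator B_def trm[unfolded B_def])
  also have "\<dots> = ennreal (4^DIM('a) * R powr (n - s) / (1 - q))"
  proof (rule suminf_ennreal_eq)
    show "0 \<le> 4^DIM('a) * R powr (n - s) * q ^ k" for k using q0 by simp
    show "(\<lambda>k. 4^DIM('a) * R powr (n - s) * q ^ k) sums (4^DIM('a) * R powr (n - s) / (1 - q))"
      using sums_mult[OF geometric_sums[of q], of "4^DIM('a) * R powr (n - s)"] q0 q1
      by (simp add: field_simps)
  qed
  finally show ?thesis by (simp add: n_def q_def)
qed



lemma lip_aux:
  fixes a b s :: real
  assumes "0 \<le> a" "a \<le> b" "0 < s"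
  shows "1 / (1 + a) powr s - 1 / (1 + b) powr s \<le> s * (b - a) / (1 + a) powr s"
proof -
  define p where "p = (1 + b) / (1 + a)"
  have p1: "1 \<le> p" using assms by (simp add: p_def field_simps)
  have "1 - s * ln p \<le> exp (- (s * ln p))" using exp_ge_add_one_self[of "- (s * ln p)"] by simp
  also have "exp (- (s * ln p)) = p powr (-s)" using p1 by (simp add: powr_def)
  finally have h1: "1 - p powr (-s) \<le> s * ln p" by simp
  have "ln p \<le> p - 1" using p1 by (intro ln_le_minus_one) simp
  also have "p - 1 = (b - a) / (1 + a)" using assms by (simp add: p_def field_simps)
  also have "\<dots> \<le> (b - a) / 1" using assms by (intro divide_left_mono) auto
  also have "\<dots> = b - a" by simp
  finally have h2: "1 - p powr (-s) \<le> s * (b - a)" using h1 assms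
    by (meson mult_left_mono less_imp_le order_trans)
  have "1 / (1 + b) powr s = p powr (-s) / (1 + a) powr s"
    using assms by (simp add: p_def powr_minus_divide powr_divide divide_simps)
  then have "1 / (1 + a) powr s - 1 / (1 + b) powr s = (1 - p powr (-s)) / (1 + a) powr s"
    by (simp add: diff_divide_distrib)
  also have "\<dots> \<le> s * (b - a) / (1 + a) powr s"
    using h2 assms by (intro divide_right_mono) auto
  finally show ?thesis .
qed

lemma lip_abs:
  fixes a b s :: real
  assumes "0 \<le> a" "0 \<le> b" "0 < s"
  shows "\<bar>1 / (1 + a) powr s - 1 / (1 + b) powr s\<bar> \<le> s * \<bar>a - b\<bar> / (1 + min a b) powr s"
proof (cases "a \<le> b")
  case True
  have "1 / (1 + b) powr s \<le> 1 / (1 + a) powr s"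
    using True assms by (intro divide_left_mono powr_mono2) auto
  then show ?thesis using lip_aux[of a b s] True assms by (simp add: min_def)
next
  case False
  have "1 / (1 + a) powr s \<le> 1 / (1 + b) powr s"
    using False assms by (intro divide_left_mono powr_mono2) auto
  then show ?thesis using lip_aux[of b a s] False assms by (simp add: min_def)
qed

lemma lip_phi:
  fixes z v :: "'a::euclidean_space" and s :: real
  assumes "norm v \<le> 1/2" "0 < s"
  shows "\<bar>1 / (1 + norm (z - v)) powr s - 1 / (1 + norm z) powr s\<bar>
    \<le> s * 2 powr s * norm v * (1 / (1 + norm z) powr s)"
proof -
  have d: "\<bar>norm (z - v) - norm z\<bar> \<le> norm v"
    using norm_triangle_ineq3[of "z - v" z] by simp
  have m: "(1 + norm z) / 2 \<le> 1 + min (norm (z - v)) (norm z)"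
  proof -
    have "0 \<le> norm (z - v)" by simp
    moreover have "0 \<le> norm z" by simp
    ultimately have "(1 + norm z) / 2 \<le> 1 + norm (z - v) \<and> (1 + norm z) / 2 \<le> 1 + norm z"
      using d assms unfolding abs_le_iff by argo
    then show ?thesis by (simp add: min_def)
  qed
  have pz: "0 < 1 + norm z" by (simp add: add_pos_nonneg)
  have "\<bar>1 / (1 + norm (z - v)) powr s - 1 / (1 + norm z) powr s\<bar>
     \<le> s * \<bar>norm (z - v) - norm z\<bar> / (1 + min (norm (z - v)) (norm z)) powr s"
    using assms by (intro lip_abs) auto
  also have "\<dots> \<le> s * norm v / ((1 + norm z) / 2) powr s"
    using d m assms pz by (intro frac_le mult_left_mono powr_mono2) auto
  also have "\<dots> = s * 2 powr s * norm v * (1 / (1 + norm z) powr s)"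
    by (simp add: powr_divide)
  finally show ?thesis .
qed



definition Ic :: "nat \<Rightarrow> real \<Rightarrow> real" where
  "Ic n s = 2^n + 4^n / (1 - 2 powr (real n - s))"

lemma phi_int:
  assumes s: "s > real DIM('a::euclidean_space)"
  shows "(\<integral>\<^sup>+z. ennreal (1 / (1 + norm (z::'a)) powr s) \<partial>lborel) \<le> ennreal (Ic DIM('a) s)"
proof -
  have s0: "0 < s" using s by (metis DIM_positive of_nat_0_less_iff order.strict_trans)
  have pw: "ennreal (1 / (1 + norm z) powr s)
     \<le> indicator (cbox (- One) (One::'a)) z + indicator {u::'a. 1 < norm u} z * ennreal (norm z powr (-s))" for z :: 'a
  proof (cases "1 < norm z")
    case True
    have "1 / (1 + norm z) powr s \<le> 1 / norm z powr s"
      using True s0 by (intro divide_left_mono powr_mono2 mult_pos_pos) auto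
    then have "1 / (1 + norm z) powr s \<le> norm z powr (-s)"
      by (simp add: powr_minus_divide)
    then show ?thesis using True by (simp add: add_increasing)
  next
    case False
    have "z \<in> cbox (- One) One" using False
      by (auto simp: mem_box One_inner_Basis abs_le_iff dest!: Basis_le_norm[of _ z])
    moreover have "1 / (1 + norm z) powr s \<le> 1" using s0
      by (simp add: divide_le_eq ge_one_powr_ge_zero)
    ultimately show ?thesis using False by simp
  qed
  have "(\<integral>\<^sup>+z. ennreal (1 / (1 + norm (z::'a)) powr s) \<partial>lborel)
     \<le> (\<integral>\<^sup>+z. indicator (cbox (- One) (One::'a)) z + indicator {u::'a. 1 < norm u} z * ennreal (norm z powr (-s)) \<partial>lborel)"
    by (intro nn_integral_mono pw)
  also have "\<dots> = emeasure lborel (cbox (- One) (One::'a)) + (\<integral>\<^sup>+z. indicator {u::'a. 1 < norm u} z * ennreal (norm z powr (-s)) \<partial>lborel)"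
    by (subst nn_integral_add) auto
  also have "\<dots> \<le> ennreal (2^DIM('a)) + ennreal (4^DIM('a) / (1 - 2 powr (real DIM('a) - s)) * 1 powr (real DIM('a) - s))"
  proof (intro add_mono tail_bound s)
    have e: "(\<Prod>b\<in>(Basis::'a set). (One + One) \<bullet> b) = (\<Prod>b\<in>(Basis::'a set). 2)"
      by (rule prod.cong) (auto simp: inner_add_left One_inner_Basis)
    have "emeasure lborel (cbox (- One) (One::'a)) = ennreal (\<Prod>b\<in>(Basis::'a set). (One + One) \<bullet> b)"
      unfolding emeasure_lborel_cbox_eq by (auto simp: One_inner_Basis)
    then show "emeasure lborel (cbox (- One) (One::'a)) \<le> ennreal (2^DIM('a))"
      unfolding e by (simp add: prod_constant)
  qed simp
  also have "\<dots> = ennreal (Ic DIM('a) s)"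
  proof -
    have "0 \<le> 4^DIM('a) / (1 - 2 powr (real DIM('a) - s))"
      using s powr_less_mono[of "real DIM('a) - s" 0 2] by simp
    then show ?thesis by (simp add: Ic_def ennreal_plus[symmetric] del: ennreal_plus)
  qed
  finally show ?thesis .
qed

lemma phi_int_shift:
  fixes c :: "'a::euclidean_space"
  assumes s: "s > real DIM('a::euclidean_space)"
  shows "(\<integral>\<^sup>+u. ennreal (1 / (1 + norm (u - c)) powr s) \<partial>lborel) \<le> ennreal (Ic DIM('a) s)"
proof -
  have "(\<integral>\<^sup>+u. ennreal (1 / (1 + norm (u - c)) powr s) \<partial>lborel)
     = (\<integral>\<^sup>+u. ennreal (1 / (1 + norm (u + (- c))) powr s) \<partial>lborel)" by simp
  also have "\<dots> = (\<integral>\<^sup>+z. ennreal (1 / (1 + norm (z::'a)) powr s) \<partial>lborel)"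
  proof -
    have m: "(\<lambda>z. ennreal (1 / (1 + norm (z::'a)) powr s)) \<in> borel_measurable borel" by measurable
    show ?thesis using nn_integral_translate[OF m, of "- c"] by simp
  qed
  finally show ?thesis using phi_int[OF s] by simp
qed




definition gfun :: "real \<Rightarrow> 'a::euclidean_space \<Rightarrow> 'a \<Rightarrow> ennreal" where
  "gfun s y v = (\<integral>\<^sup>+u. ennreal \<bar>1 / (1 + norm (u - v - y)) powr s - 1 / (1 + norm (u - y)) powr s\<bar>
      * indicator {u. norm u > 2 * norm v} u \<partial>lborel)"

lemma Ic_nonneg: "s > real DIM('a::euclidean_space) \<Longrightarrow> 0 \<le> Ic DIM('a) s"
  unfolding Ic_def using powr_less_mono[of "real DIM('a) - s" 0 2] by simp

lemma gB:
  fixes y v :: "'a::euclidean_space"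
  assumes s: "s > real DIM('a)"
  shows "gfun s y v \<le> ennreal (2 * Ic DIM('a) s)"
proof -
  have "gfun s y v \<le> (\<integral>\<^sup>+u. ennreal (1 / (1 + norm (u - (v + y))) powr s) + ennreal (1 / (1 + norm (u - y)) powr s) \<partial>lborel)"
    unfolding gfun_def
  proof (intro nn_integral_mono)
    fix u :: 'a
    have "\<bar>1 / (1 + norm (u - v - y)) powr s - 1 / (1 + norm (u - y)) powr s\<bar>
       \<le> 1 / (1 + norm (u - (v + y))) powr s + 1 / (1 + norm (u - y)) powr s"
      by (simp add: diff_diff_eq abs_le_iff)
    then show "ennreal \<bar>1 / (1 + norm (u - v - y)) powr s - 1 / (1 + norm (u - y)) powr s\<bar>
      * indicator {u. norm u > 2 * norm v} u \<le> ennreal (1 / (1 + norm (u - (v + y))) powr s) + ennreal (1 / (1 + norm (u - y)) powr s)"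
      by (auto simp: indicator_def ennreal_plus[symmetric] simp del: ennreal_plus intro!: ennreal_leI)
  qed
  also have "\<dots> = (\<integral>\<^sup>+u. ennreal (1 / (1 + norm (u - (v + y))) powr s) \<partial>lborel) + (\<integral>\<^sup>+u. ennreal (1 / (1 + norm (u - y)) powr s) \<partial>lborel)"
    by (rule nn_integral_add) auto
  also have "\<dots> \<le> ennreal (Ic DIM('a) s) + ennreal (Ic DIM('a) s)"
    by (intro add_mono phi_int_shift s)
  also have "\<dots> = ennreal (2 * Ic DIM('a) s)"
  proof -
    have "0 \<le> Ic DIM('a) s" unfolding Ic_def
      using s powr_less_mono[of "real DIM('a) - s" 0 2] by simp
    then show ?thesis by (simp add: ennreal_plus[symmetric] del: ennreal_plus)
  qed
  finally show ?thesis .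
qed

lemma gA:
  fixes y v :: "'a::euclidean_space"
  assumes s: "s > real DIM('a)" and v: "norm v \<le> 1/2"
  shows "gfun s y v \<le> ennreal (s * 2 powr s * norm v * Ic DIM('a) s)"
proof -
  have s0: "0 < s" using s by (metis DIM_positive of_nat_0_less_iff order.strict_trans)
  have "gfun s y v \<le> (\<integral>\<^sup>+u. ennreal (s * 2 powr s * norm v) * ennreal (1 / (1 + norm (u - y)) powr s) \<partial>lborel)"
    unfolding gfun_def
  proof (intro nn_integral_mono)
    fix u :: 'a
    have "\<bar>1 / (1 + norm (u - v - y)) powr s - 1 / (1 + norm (u - y)) powr s\<bar>
       \<le> s * 2 powr s * norm v * (1 / (1 + norm (u - y)) powr s)"
      using lip_phi[OF v s0, of "u - y"] by (simp add: algebra_simps)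
    then show "ennreal \<bar>1 / (1 + norm (u - v - y)) powr s - 1 / (1 + norm (u - y)) powr s\<bar>
      * indicator {u. norm u > 2 * norm v} u \<le> ennreal (s * 2 powr s * norm v) * ennreal (1 / (1 + norm (u - y)) powr s)"
      using s0 by (auto simp: indicator_def ennreal_mult[symmetric] intro!: ennreal_leI)
  qed
  also have "\<dots> = ennreal (s * 2 powr s * norm v) * (\<integral>\<^sup>+u. ennreal (1 / (1 + norm (u - y)) powr s) \<partial>lborel)"
    by (rule nn_integral_cmult) auto
  also have "\<dots> \<le> ennreal (s * 2 powr s * norm v) * ennreal (Ic DIM('a) s)"
    by (intro mult_left_mono phi_int_shift s) auto
  also have "\<dots> = ennreal (s * 2 powr s * norm v * Ic DIM('a) s)"
    by (subst ennreal_mult) (use s0 Ic_nonneg[OF s] in auto)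
  finally show ?thesis .
qed

lemma gD:
  fixes y v :: "'a::euclidean_space"
  assumes s: "s > real DIM('a)" and v: "4 * norm y \<le> norm v" and v0: "v \<noteq> 0"
  shows "gfun s y v \<le> ennreal (4 powr s * (4^DIM('a) / (1 - 2 powr (real DIM('a) - s)) * (2 * norm v) powr (real DIM('a) - s)))"
proof -
  have s0: "0 < s" using s by (metis DIM_positive of_nat_0_less_iff order.strict_trans)
  have "gfun s y v \<le> (\<integral>\<^sup>+u. ennreal (4 powr s) * (indicator {u::'a. 2 * norm v < norm u} u * ennreal (norm u powr (-s))) \<partial>lborel)"
    unfolding gfun_def
  proof (intro nn_integral_mono)
    fix u :: 'a
    show "ennreal \<bar>1 / (1 + norm (u - v - y)) powr s - 1 / (1 + norm (u - y)) powr s\<bar>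
      * indicator {u. norm u > 2 * norm v} u \<le> ennreal (4 powr s) * (indicator {u::'a. 2 * norm v < norm u} u * ennreal (norm u powr (-s)))"
    proof (cases "2 * norm v < norm u")
      case False then show ?thesis by simp
    next
      case True
      have u0: "0 < norm u" using True v0 by (smt (verit) norm_ge_zero)
      have key: "1 / (1 + norm w) powr s \<le> 4 powr s * norm u powr (-s)" if w: "norm u / 4 \<le> norm w" for w :: 'a
      proof -
        have "1 / (1 + norm w) powr s \<le> 1 / (norm u / 4) powr s"
          using w u0 s0 add_pos_nonneg[of 1 "norm w"] by (intro divide_left_mono powr_mono2 mult_pos_pos) auto
        also have "\<dots> = 4 powr s * norm u powr (-s)"
          using u0 by (simp add: powr_divide powr_minus_divide)
        finally show ?thesis .
      qed
      have a: "norm u / 4 \<le> norm (u - v - y)"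
        using True v norm_triangle_ineq4[of u "v + y"] norm_triangle_ineq[of v y] norm_ge_zero[of y]
        by (simp add: diff_diff_eq) (smt (verit) norm_minus_commute norm_triangle_ineq2)
      have b: "norm u / 4 \<le> norm (u - y)"
        using True v norm_ge_zero[of y] norm_triangle_ineq2[of u y] by linarith
      have "\<bar>1 / (1 + norm (u - v - y)) powr s - 1 / (1 + norm (u - y)) powr s\<bar> \<le> 4 powr s * norm u powr (-s)"
        using key[OF a] key[OF b] by (simp add: abs_le_iff) (smt (verit) divide_nonneg_nonneg powr_ge_zero)
      then show ?thesis using True by (simp add: ennreal_mult[symmetric] ennreal_leI)
    qed
  qed
  also have "\<dots> = ennreal (4 powr s) * (\<integral>\<^sup>+u. indicator {u::'a. 2 * norm v < norm u} u * ennreal (norm u powr (-s)) \<partial>lborel)"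
    by (rule nn_integral_cmult) auto
  also have "\<dots> \<le> ennreal (4 powr s) * ennreal (4^DIM('a) / (1 - 2 powr (real DIM('a) - s)) * (2 * norm v) powr (real DIM('a) - s))"
    using v0 by (intro mult_left_mono tail_bound s) auto
  also have "\<dots> = ennreal (4 powr s * (4^DIM('a) / (1 - 2 powr (real DIM('a) - s)) * (2 * norm v) powr (real DIM('a) - s)))"
  proof -
    have "0 \<le> 4^DIM('a) / (1 - 2 powr (real DIM('a) - s)) * (2 * norm v) powr (real DIM('a) - s)"
      using powr_less_mono[of "real DIM('a) - s" 0 2] s by simp
    then show ?thesis by (intro ennreal_mult[symmetric]) auto
  qed
  finally show ?thesis .
qed




lemma scale_lemma:
  fixes y w :: "'a::euclidean_space"
  shows "(\<integral>\<^sup>+x. ennreal \<bar>Lambda j s y (x - w) - Lambda j s y x\<bar> * indicator {x. norm x > 2 * norm w} x \<partial>lborel)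
    = gfun s y ((2 powr real_of_int j) *\<^sub>R w)"
proof -
  define c where "c = 2 powr real_of_int j"
  have c0: "0 < c" by (simp add: c_def)
  define h where "h u = ennreal \<bar>1 / (1 + norm (u - c *\<^sub>R w - y)) powr s - 1 / (1 + norm (u - y)) powr s\<bar>
      * indicator {u. norm u > 2 * norm (c *\<^sub>R w)} u" for u :: 'a
  have hm[measurable]: "h \<in> borel_measurable borel" unfolding h_def by measurable
  have cn: "2 powr (real_of_int j * real DIM('a)) = c ^ DIM('a)"
    by (simp add: c_def powr_powr[symmetric] powr_realpow)
  have pw: "ennreal \<bar>Lambda j s y (x - w) - Lambda j s y x\<bar> * indicator {x. norm x > 2 * norm w} x
     = ennreal (c ^ DIM('a)) * h (0 + c *\<^sub>R x)" for x
  proof -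
    have e1: "Lambda j s y (x - w) = c ^ DIM('a) * (1 / (1 + norm (c *\<^sub>R x - c *\<^sub>R w - y)) powr s)"
      unfolding Lambda_def cn by (simp add: c_def scaleR_diff_right)
    have e2: "Lambda j s y x = c ^ DIM('a) * (1 / (1 + norm (c *\<^sub>R x - y)) powr s)"
      unfolding Lambda_def cn by (simp add: c_def)
    have e3: "(norm (c *\<^sub>R x) > 2 * norm (c *\<^sub>R w)) = (norm x > 2 * norm w)"
      using c0 by simp
    have ab: "\<bar>c ^ DIM('a) * (1 / A) - c ^ DIM('a) * (1 / B)\<bar> = c ^ DIM('a) * \<bar>1 / A - 1 / B\<bar>" for A B :: real
    proof -
      have "c ^ DIM('a) * (1 / A) - c ^ DIM('a) * (1 / B) = c ^ DIM('a) * (1 / A - 1 / B)"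
        by (simp only: right_diff_distrib)
      then show ?thesis using c0 by (simp add: abs_mult)
    qed
    show ?thesis
      unfolding h_def e1 e2 ab using c0
      by (simp add: indicator_def e3 ennreal_mult[symmetric])
  qed
  have "(\<integral>\<^sup>+x. ennreal \<bar>Lambda j s y (x - w) - Lambda j s y x\<bar> * indicator {x. norm x > 2 * norm w} x \<partial>lborel)
      = (\<integral>\<^sup>+x. ennreal (c ^ DIM('a)) * h (0 + c *\<^sub>R x) \<partial>lborel)"
    by (simp only: pw)
  also have "\<dots> = ennreal (c ^ DIM('a)) * (\<integral>\<^sup>+x. h (0 + c *\<^sub>R x) \<partial>lborel)"
    by (intro nn_integral_cmult) measurable
  also have "\<dots> = (\<integral>\<^sup>+u. h u \<partial>lborel)"
    using nn_integral_affine_euclidean[OF hm, of c 0] c0 by simp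
  also have "\<dots> = gfun s y (c *\<^sub>R w)"
    unfolding gfun_def h_def by (simp add: algebra_simps)
  finally show ?thesis by (simp add: c_def)
qed




lemma sup_le_sum:
  fixes F :: "int \<Rightarrow> ennreal"
  shows "(SUP j\<in>UNIV. F j) \<le> (\<Sum>k. F (j0 - int k) + F (j0 + 1 + int k))"
proof (rule SUP_least)
  fix j :: int
  show "F j \<le> (\<Sum>k. F (j0 - int k) + F (j0 + 1 + int k))"
  proof (cases "j \<le> j0")
    case True
    have "F j = F (j0 - int (nat (j0 - j)))" using True by simp
    also have "\<dots> \<le> F (j0 - int (nat (j0 - j))) + F (j0 + 1 + int (nat (j0 - j)))" by simp
    also have "\<dots> \<le> (\<Sum>k. F (j0 - int k) + F (j0 + 1 + int k))" by (rule ennreal_le_suminf)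
    finally show ?thesis .
  next
    case False
    have "F j = F (j0 + 1 + int (nat (j - j0 - 1)))" using False by simp
    also have "\<dots> \<le> F (j0 - int (nat (j - j0 - 1))) + F (j0 + 1 + int (nat (j - j0 - 1)))" by simp
    also have "\<dots> \<le> (\<Sum>k. F (j0 - int k) + F (j0 + 1 + int k))" by (rule ennreal_le_suminf)
    finally show ?thesis .
  qed
qed

lemma first_part:
  fixes y w :: "'a::euclidean_space"
  assumes s: "s > real DIM('a)" and c0: "2 powr real_of_int j0 * norm w \<le> 1/2"
  shows "gfun s y ((2 powr real_of_int (j0 - int k)) *\<^sub>R w)
     \<le> ennreal (s * 2 powr s * Ic DIM('a) s * (2 powr real_of_int j0 * norm w) * (1/2)^k)"
proof -
  have e: "2 powr real_of_int (j0 - int k) = 2 powr real_of_int j0 * (1/2)^k"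
  proof -
    have r: "real_of_int (j0 - int k) = real_of_int j0 - real k" by simp
    have "2 powr real_of_int (j0 - int k) = 2 powr real_of_int j0 / 2 powr real k"
      unfolding r by (rule powr_diff)
    also have "2 powr real k = (2::real) ^ k" by (rule powr_realpow) simp
    finally show ?thesis by (simp add: power_divide)
  qed
  have nv: "norm ((2 powr real_of_int (j0 - int k)) *\<^sub>R w) = 2 powr real_of_int j0 * norm w * (1/2)^k"
    unfolding e by simp
  have "norm ((2 powr real_of_int (j0 - int k)) *\<^sub>R w) \<le> 1/2"
  proof -
    have "2 powr real_of_int j0 * norm w * (1/2)^k \<le> 2 powr real_of_int j0 * norm w"
      by (rule mult_left_le) (auto simp: power_le_one)
    then show ?thesis unfolding nv using c0 by linarith
  qed
  from gA[OF s this, of y] show ?thesis unfolding nv by (simp add: mult_ac)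
qed




lemma second_part:
  fixes y w :: "'a::euclidean_space"
  assumes s: "s > real DIM('a)" and hi: "2 powr real_of_int j0 * norm w \<le> 1/2"
    and lo: "1/4 < 2 powr real_of_int j0 * norm w"
    and N: "\<And>k. N \<le> k \<Longrightarrow> 4 * norm y \<le> 2 ^ k / 2"
  shows "gfun s y ((2 powr real_of_int (j0 + 1 + int k)) *\<^sub>R w)
     \<le> ennreal (2 * Ic DIM('a) s * (if k < N then 1 else 0)
         + 4 powr s * (4^DIM('a) / (1 - 2 powr (real DIM('a) - s))) * (2 powr (real DIM('a) - s)) ^ k)"
proof -
  define c where "c = 2 powr real_of_int j0 * norm w"
  have e: "2 powr real_of_int (j0 + 1 + int k) = 2 powr real_of_int j0 * 2 * 2 ^ k"
  proof -
    have r: "real_of_int (j0 + 1 + int k) = real_of_int j0 + (1 + real k)" by simp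
    have "2 powr real_of_int (j0 + 1 + int k) = 2 powr real_of_int j0 * (2 powr 1 * 2 powr real k)"
      unfolding r by (simp only: powr_add)
    also have "2 powr real k = (2::real) ^ k" by (rule powr_realpow) simp
    finally show ?thesis by simp
  qed
  have nv: "norm ((2 powr real_of_int (j0 + 1 + int k)) *\<^sub>R w) = 2 * c * 2 ^ k"
    unfolding e c_def by simp
  have q0: "0 < 1 - 2 powr (real DIM('a) - s)"
    using s powr_less_mono[of "real DIM('a) - s" 0 2] by simp
  define D where "D = 4 powr s * (4^DIM('a) / (1 - 2 powr (real DIM('a) - s)))"
  have D0: "0 \<le> D" using q0 by (simp add: D_def)
  have I0: "0 \<le> Ic DIM('a) s" by (rule Ic_nonneg[OF s])
  show ?thesis
  proof (cases "k < N")
    case True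
    have "gfun s y ((2 powr real_of_int (j0 + 1 + int k)) *\<^sub>R w) \<le> ennreal (2 * Ic DIM('a) s)"
      by (rule gB[OF s])
    also have "\<dots> \<le> ennreal (2 * Ic DIM('a) s * (if k < N then 1 else 0) + D * (2 powr (real DIM('a) - s)) ^ k)"
      using True D0 by (intro ennreal_leI) simp
    finally show ?thesis by (simp add: D_def)
  next
    case False
    have w0: "w \<noteq> 0" using lo by auto
    have v0: "(2 powr real_of_int (j0 + 1 + int k)) *\<^sub>R w \<noteq> 0" using w0 by simp
    have tk: "2 ^ k / 2 < 2 * c * 2 ^ k" using lo by (simp add: c_def)
    have v4: "4 * norm y \<le> norm ((2 powr real_of_int (j0 + 1 + int k)) *\<^sub>R w)"
    proof -
      have "4 * norm y \<le> 2 ^ k / 2" using N False by simp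
      then show ?thesis unfolding nv using tk by linarith
    qed
    have "gfun s y ((2 powr real_of_int (j0 + 1 + int k)) *\<^sub>R w)
        \<le> ennreal (D * (2 * (2 * c * 2 ^ k)) powr (real DIM('a) - s))"
      using gD[OF s v4 v0] unfolding nv by (simp add: D_def mult.assoc)
    also have "\<dots> \<le> ennreal (D * (2 powr (real DIM('a) - s)) ^ k)"
    proof (intro ennreal_leI mult_left_mono D0)
      have "(2 * (2 * c * 2 ^ k)) powr (real DIM('a) - s) \<le> (2 ^ k) powr (real DIM('a) - s)"
        using s lo tk by (intro powr_mono2') (auto simp: c_def)
      also have "\<dots> = (2 powr (real DIM('a) - s)) ^ k"
        by (simp add: powr_realpow[symmetric] powr_powr powr_power mult.commute)
      finally show "(2 * (2 * c * 2 ^ k)) powr (real DIM('a) - s) \<le> (2 powr (real DIM('a) - s)) ^ k" .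
    qed
    also have "\<dots> = ennreal (2 * Ic DIM('a) s * (if k < N then 1 else 0) + D * (2 powr (real DIM('a) - s)) ^ k)"
      using False by simp
    finally show ?thesis by (simp add: D_def)
  qed
qed




lemma j0_facts:
  fixes r :: real
  assumes r: "0 < r"
  shows "2 powr real_of_int \<lfloor>log 2 (1 / (2 * r))\<rfloor> * r \<le> 1/2"
    and "1/4 < 2 powr real_of_int \<lfloor>log 2 (1 / (2 * r))\<rfloor> * r"
proof -
  define a where "a = 1 / (2 * r)"
  have a0: "0 < a" using r by (simp add: a_def)
  have "2 powr real_of_int \<lfloor>log 2 a\<rfloor> \<le> 2 powr (log 2 a)" by (intro powr_mono) auto
  also have "\<dots> = a" using a0 by (intro powr_log_cancel) auto
  finally have h1: "2 powr real_of_int \<lfloor>log 2 a\<rfloor> \<le> a" .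
  have "a = 2 powr (log 2 a)" using a0 by (intro powr_log_cancel[symmetric]) auto
  also have "\<dots> < 2 powr (real_of_int \<lfloor>log 2 a\<rfloor> + 1)" by (intro powr_less_mono) auto
  also have "\<dots> = 2 * 2 powr real_of_int \<lfloor>log 2 a\<rfloor>" by (simp add: powr_add)
  finally have h2: "a < 2 * 2 powr real_of_int \<lfloor>log 2 a\<rfloor>" .
  show "2 powr real_of_int \<lfloor>log 2 (1 / (2 * r))\<rfloor> * r \<le> 1/2"
    using mult_right_mono[OF h1, of r] r unfolding a_def by simp
  show "1/4 < 2 powr real_of_int \<lfloor>log 2 (1 / (2 * r))\<rfloor> * r"
    using mult_strict_right_mono[OF h2 r] r unfolding a_def by (simp add: field_simps)
qed

lemma N_facts:
  fixes Y :: real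
  assumes Y: "0 \<le> Y"
  defines "N \<equiv> nat \<lceil>log 2 (4 * Y + 1)\<rceil> + 1"
  shows "\<And>k. N \<le> k \<Longrightarrow> 4 * Y \<le> 2 ^ k / 2"
    and "real N \<le> 6 * ln (exp 1 + Y)"
proof -
  define l where "l = log 2 (4 * Y + 1)"
  have l0: "0 \<le> l" using Y by (simp add: l_def)
  show "4 * Y \<le> 2 ^ k / 2" if k: "N \<le> k" for k
  proof -
    have kk: "nat \<lceil>l\<rceil> \<le> k - 1" using k unfolding N_def l_def by arith
    have "4 * Y + 1 = 2 powr l" using Y unfolding l_def by (intro powr_log_cancel[symmetric]) auto
    also have "\<dots> \<le> 2 powr real (nat \<lceil>l\<rceil>)" using l0 by (intro powr_mono) auto
    also have "\<dots> = 2 ^ (nat \<lceil>l\<rceil>)" by (rule powr_realpow) simp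
    also have "\<dots> \<le> 2 ^ (k - 1)" using kk by (intro power_increasing) auto
    also have "\<dots> = 2 ^ k / 2" using k unfolding N_def
      by (cases k) auto
    finally show ?thesis by simp
  qed
  define L where "L = ln (exp 1 + Y)"
  have eY: "0 < exp 1 + Y" using Y by (simp add: add_pos_nonneg)
  have L1: "1 \<le> L" unfolding L_def using Y eY
    by (subst ln_ge_iff) auto
  have "ln (4 * Y + 1) \<le> ln (4 * (exp 1 + Y))"
    using Y eY exp_ge_add_one_self[of 1] by (subst ln_le_cancel_iff) auto
  also have "\<dots> = ln 4 + L" unfolding L_def
    using Y eY by (subst ln_mult) auto
  also have "ln (4::real) = 2 * ln 2"
    using ln_realpow[of 2 2] by simp
  finally have "ln (4 * Y + 1) \<le> 2 * ln 2 + L" .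
  then have "l \<le> 2 + L / ln 2" unfolding l_def log_def
    by (simp add: divide_right_mono add_divide_distrib[symmetric] field_simps)
  also have "L / ln 2 \<le> L / (2/3)"
    using L1 ln2_ge_two_thirds by (intro divide_left_mono) auto
  finally have l2: "l \<le> 2 + 3/2 * L" by simp
  have "real N \<le> l + 2" unfolding N_def l_def[symmetric] using l0
    by (simp add: of_nat_nat) linarith
  then show "real N \<le> 6 * ln (exp 1 + Y)" using l2 L1 unfolding L_def by linarith
qed




theorem mainTheorem9:
  fixes \<sigma> :: real
  assumes "\<sigma> > real DIM('a::euclidean_space)"
  shows "\<exists>C::real. \<forall>y::'a.
    (SUP w\<in>(UNIV::'a set). \<integral>\<^sup>+ x \<in> {x. norm x > 2 * norm w}.
        (SUP j\<in>(UNIV::int set). ennreal \<bar>Lambda j \<sigma> y (x - w) - Lambda j \<sigma> y x\<bar>) \<partial>lborel)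
    \<le> ennreal (C * ln (exp 1 + norm y))"
proof -
  define s where "s = \<sigma>"
  have s: "s > real DIM('a)" using assms by (simp add: s_def)
  define q where "q = 2 powr (real DIM('a) - s)"
  have q0: "0 < q" and q1: "q < 1"
    using s powr_less_mono[of "real DIM('a) - s" 0 2] by (auto simp: q_def)
  have s0: "0 < s" using s by (metis DIM_positive of_nat_0_less_iff order.strict_trans)
  define A where "A = s * 2 powr s * Ic DIM('a) s"
  define B where "B = 2 * Ic DIM('a) s"
  define D where "D = 4 powr s * (4^DIM('a) / (1 - q))"
  have I0: "0 \<le> Ic DIM('a) s" by (rule Ic_nonneg[OF s])
  have A0: "0 \<le> A" using s0 I0 by (simp add: A_def)
  have B0: "0 \<le> B" using I0 by (simp add: B_def)
  have D0: "0 \<le> D" using q1 by (simp add: D_def)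
  define C where "C = A + 6 * B + D / (1 - q)"
  show ?thesis
  proof (intro exI allI)
    fix y :: 'a
    define L where "L = ln (exp 1 + norm y)"
    have eY: "0 < exp 1 + norm y" by (simp add: add_pos_nonneg)
    have L1: "1 \<le> L" unfolding L_def using eY by (subst ln_ge_iff) auto
    have C0: "0 \<le> C" using A0 B0 D0 q1 by (simp add: C_def)
    show "(SUP w\<in>(UNIV::'a set). \<integral>\<^sup>+ x \<in> {x. norm x > 2 * norm w}.
        (SUP j\<in>(UNIV::int set). ennreal \<bar>Lambda j \<sigma> y (x - w) - Lambda j \<sigma> y x\<bar>) \<partial>lborel)
      \<le> ennreal (C * ln (exp 1 + norm y))"
      unfolding L_def[symmetric] s_def[symmetric]
    proof (rule SUP_least)
      fix w :: 'a
      show "(\<integral>\<^sup>+ x \<in> {x. norm x > 2 * norm w}.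
        (SUP j\<in>(UNIV::int set). ennreal \<bar>Lambda j s y (x - w) - Lambda j s y x\<bar>) \<partial>lborel) \<le> ennreal (C * L)"
      proof (cases "w = 0")
        case True
        then show ?thesis by simp
      next
        case False
        define r where "r = norm w"
        have r0: "0 < r" using False by (simp add: r_def)
        define j0 where "j0 = \<lfloor>log 2 (1 / (2 * r))\<rfloor>"
        define c where "c = 2 powr real_of_int j0 * norm w"
        have hi: "c \<le> 1/2" and lo: "1/4 < c"
          using j0_facts[OF r0] unfolding c_def j0_def r_def by auto
        define N where "N = nat \<lceil>log 2 (4 * norm y + 1)\<rceil> + 1"
        have Nk: "\<And>k. N \<le> k \<Longrightarrow> 4 * norm y \<le> 2 ^ k / 2"
          and N6: "real N \<le> 6 * L"
          using N_facts[of "norm y"] unfolding N_def L_def by auto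
        define G where "G j x = ennreal \<bar>Lambda j s y (x - w) - Lambda j s y x\<bar> * indicator {x. norm x > 2 * norm w} x"
          for j x
        have Gm[measurable]: "G j \<in> borel_measurable lborel" for j
          unfolding G_def Lambda_def by measurable
        have "(\<integral>\<^sup>+ x \<in> {x. norm x > 2 * norm w}.
            (SUP j\<in>(UNIV::int set). ennreal \<bar>Lambda j s y (x - w) - Lambda j s y x\<bar>) \<partial>lborel)
          \<le> (\<integral>\<^sup>+ x. (\<Sum>k. G (j0 - int k) x + G (j0 + 1 + int k) x) \<partial>lborel)"
        proof (intro nn_integral_mono)
          fix x :: 'a
          show "(SUP j\<in>(UNIV::int set). ennreal \<bar>Lambda j s y (x - w) - Lambda j s y x\<bar>) * indicator {x. norm x > 2 * norm w} x
            \<le> (\<Sum>k. G (j0 - int k) x + G (j0 + 1 + int k) x)"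
          proof (cases "norm x > 2 * norm w")
            case True
            then show ?thesis unfolding G_def
              using sup_le_sum[of "\<lambda>j. ennreal \<bar>Lambda j s y (x - w) - Lambda j s y x\<bar>" j0] by simp
          next
            case False
            then show ?thesis by simp
          qed
        qed
        also have "\<dots> = (\<Sum>k. (\<integral>\<^sup>+ x. G (j0 - int k) x \<partial>lborel) + (\<integral>\<^sup>+ x. G (j0 + 1 + int k) x \<partial>lborel))"
          by (subst nn_integral_suminf) (auto simp: nn_integral_add)
        also have "\<dots> = (\<Sum>k. gfun s y ((2 powr real_of_int (j0 - int k)) *\<^sub>R w)
                         + gfun s y ((2 powr real_of_int (j0 + 1 + int k)) *\<^sub>R w))"
          unfolding G_def scale_lemma ..
        also have "\<dots> \<le> (\<Sum>k. ennreal (A * c * (1/2)^k + (B * (if k < N then 1 else 0) + D * q ^ k)))"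
        proof (intro suminf_le allI summableI)
          fix k
          have "gfun s y ((2 powr real_of_int (j0 - int k)) *\<^sub>R w) \<le> ennreal (A * c * (1/2)^k)"
            using first_part[OF s, of j0 w y k] hi unfolding A_def c_def by simp
          moreover have "gfun s y ((2 powr real_of_int (j0 + 1 + int k)) *\<^sub>R w)
              \<le> ennreal (B * (if k < N then 1 else 0) + D * q ^ k)"
            using second_part[OF s, of j0 w N y k] hi lo Nk unfolding B_def D_def q_def c_def by simp
          ultimately show "gfun s y ((2 powr real_of_int (j0 - int k)) *\<^sub>R w)
                         + gfun s y ((2 powr real_of_int (j0 + 1 + int k)) *\<^sub>R w)
              \<le> ennreal (A * c * (1/2)^k + (B * (if k < N then 1 else 0) + D * q ^ k))"
            using A0 B0 D0 q0 lo by (subst ennreal_plus) (auto intro: add_mono)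
        qed
        also have "\<dots> = ennreal (A * c * 2 + (B * real N + D / (1 - q)))"
        proof (rule suminf_ennreal_eq)
          show "0 \<le> A * c * (1/2)^k + (B * (if k < N then 1 else 0) + D * q ^ k)" for k
            using A0 B0 D0 q0 lo by auto
          have g1: "(\<lambda>k. A * c * (1/2::real)^k) sums (A * c * 2)"
            using sums_mult[OF geometric_sums[of "1/2::real"], of "A * c"] by simp
          have g2: "(\<lambda>k. B * (if k < N then 1 else 0)) sums (B * real N)"
          proof -
            have "(\<lambda>k. B * (if k < N then 1 else 0)) sums (\<Sum>k\<in>{..<N}. B * (if k < N then 1 else 0))"
              by (rule sums_finite) auto
            then show ?thesis by (simp add: mult.commute)
          qed
          have g3: "(\<lambda>k. D * q ^ k) sums (D / (1 - q))"
            using sums_mult[OF geometric_sums[of q], of D] q0 q1 by (simp add: divide_inverse)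
          show "(\<lambda>k. A * c * (1/2)^k + (B * (if k < N then 1 else 0) + D * q ^ k)) sums (A * c * 2 + (B * real N + D / (1 - q)))"
            by (intro sums_add g1 g2 g3)
        qed
        also have "\<dots> \<le> ennreal (C * L)"
        proof (intro ennreal_leI)
          have "c * 2 \<le> L" using hi L1 by linarith
          from mult_left_mono[OF this A0] have "A * c * 2 \<le> A * L" by (simp add: mult.assoc)
          moreover have "B * real N \<le> 6 * B * L" using mult_left_mono[OF N6 B0] by (simp add: mult_ac)
          moreover have "D / (1 - q) \<le> D / (1 - q) * L"
          proof -
            have "0 \<le> D / (1 - q)" using D0 q1 by simp
            from mult_left_mono[OF L1 this] show ?thesis by simp
          qed
          ultimately show "A * c * 2 + (B * real N + D / (1 - q)) \<le> C * L"
            unfolding C_def by (simp add: algebra_simps)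
        qed
        finally show ?thesis .
      qed
    qed
  qed
qed


end
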